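(* Let $OPT_{ST}=(T\cup OPT,F)$ be a feasible Steiner tree for the associated Steiner tree instance of a CacAP instance, with $|F|=|OPT|+t-1$ where $OPT$ is an optimal CacAP solution and $t=|T|$, in which every terminal has degree $1$; root it at a Steiner node $r$ adjacent to at least one terminal, and apply the random marking scheme described in the context. Then for every $\ell\in OPT$, $c(\ell)\le \hat H_{d(\ell)}$, where $\hat H_i:=\sum_{j\ge0}\frac{1}{2^{j+1}}H_{i+j}$.
   Context: A cactus is a connected undirected multigraph (length-2 cycles allowed) in which every edge belongs to exactly one cycle. A CacAP instance is a cactus $G=(V,E)$ with a link set $L$; $A\subseteq L$ is feasible if $(V,E\cup A)$ is $3$-edge-connected; $OPT$ is a minimum-cardinality feasible solution. For a link $\ell=\{v_0,v_{q+1}\}$, let $v_1,\dots,v_q$ be the nodes of degree $\ge4$ other than $v_0,v_{q+1}$ lying (in order) on every simple $v_0$-$v_{q+1}$ path; the pairs $\{v_i,v_{i+1}\}$ are the projections of $\ell$, each on a distinct cycle. Two links with endpoints on a common cycle $C$ cross if they share an endpoint or a simple path along $C$ between the endpoints of one contains exactly one endpoint of the other as an internal node; general links cross if some of their projections cross. The associated Steiner tree instance $G_{ST}=(T\cup L,E_{ST})$ has terminals $T$ = degree-$2$ nodes of $G$, Steiner nodes $L$, edges $\{\ell,v\}$ for each link $\ell$ with endpoint $v\in T$, and $\{\ell,\ell'\}$ for crossing links. A feasible Steiner tree is a subtree of $G_{ST}$ containing $T$. In the rooted tree $OPT_{ST}$, for a Steiner node $\ell$, $d(\ell)$ is its number of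 children and $t(\ell)$ its number of terminal children. Marking scheme: independently for each Steiner node $\ell$, if $t(\ell)>0$, one terminal child $v$ of $\ell$ is chosen uniformly at random and $\{\ell,v\}$ is marked; otherwise one child $\ell'$ of $\ell$ is chosen uniformly at random and $\{\ell,\ell'\}$ is marked. All other edges are unmarked. Each Steiner node $\ell$ has exactly one marked child edge $m(\ell)$. For an edge $e\in F$, $W(e)$ is the set of pairs of terminals $\{t',t''\}$ such that the simple $t'$-$t''$ path in $OPT_{ST}$ contains $e$ and exactly one unmarked edge; $w(e)=|W(e)|$. $H_i=1+\frac12+\cdots+\frac1i$, and $c(\ell)=E[H_{w(m(\ell))}]$. *)

theory Defs
  imports "HOL-Analysis.Harmonic_Numbers"
begin

definition mgraph :: "'v set \<Rightarrow> 'e set \<Rightarrow> ('e \<Rightarrow> 'v set) \<Rightarrow> bool" where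
  "mgraph V E ends \<longleftrightarrow> finite V \<and> finite E \<and> (\<forall>e\<in>E. ends e \<subseteq> V \<and> card (ends e) = 2)"

definition gpath :: "'v set \<Rightarrow> 'e set \<Rightarrow> ('e \<Rightarrow> 'v set) \<Rightarrow> 'v list \<Rightarrow> bool" where
  "gpath V E ends p \<longleftrightarrow> p \<noteq> [] \<and> distinct p \<and> set p \<subseteq> V \<and>
     (\<forall>i. Suc i < length p \<longrightarrow> (\<exists>e\<in>E. ends e = {p ! i, p ! Suc i}))"

definition connected_mg :: "'v set \<Rightarrow> 'e set \<Rightarrow> ('e \<Rightarrow> 'v set) \<Rightarrow> bool" where
  "connected_mg V E ends \<longleftrightarrow>
     (\<forall>u\<in>V. \<forall>v\<in>V. \<exists>p. gpath V E ends p \<and> hd p = u \<and> last p = v)"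

text \<open>A cycle given by its cyclic node sequence vs and edge sequence es
  (edge es!i joins vs!i and vs!(i+1 mod k)); length 2 cycles are allowed.\<close>
definition cycle_witness :: "'e set \<Rightarrow> ('e \<Rightarrow> 'v set) \<Rightarrow> 'v list \<Rightarrow> 'e list \<Rightarrow> bool" where
  "cycle_witness E ends vs es \<longleftrightarrow> length vs = length es \<and> 2 \<le> length es \<and>
     distinct vs \<and> distinct es \<and> set es \<subseteq> E \<and>
     (\<forall>i<length es. ends (es ! i) = {vs ! i, vs ! ((i + 1) mod length vs)})"

definition is_cycle :: "'e set \<Rightarrow> ('e \<Rightarrow> 'v set) \<Rightarrow> 'e set \<Rightarrow> bool" where
  "is_cycle E ends C \<longleftrightarrow> (\<exists>vs es. cycle_witness E ends vs es \<and> C = set es)"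

definition cactus :: "'v set \<Rightarrow> 'e set \<Rightarrow> ('e \<Rightarrow> 'v set) \<Rightarrow> bool" where
  "cactus V E ends \<longleftrightarrow> mgraph V E ends \<and> connected_mg V E ends \<and>
     (\<forall>e\<in>E. \<exists>!C. is_cycle E ends C \<and> e \<in> C)"

definition deg :: "'e set \<Rightarrow> ('e \<Rightarrow> 'v set) \<Rightarrow> 'v \<Rightarrow> nat" where
  "deg E ends v = card {e\<in>E. v \<in> ends e}"

definition cacap_instance ::
  "'v set \<Rightarrow> 'e set \<Rightarrow> ('e \<Rightarrow> 'v set) \<Rightarrow> 'l set \<Rightarrow> ('l \<Rightarrow> 'v set) \<Rightarrow> bool" where
  "cacap_instance V E ends L lends \<longleftrightarrow> cactus V E ends \<and> finite L \<and>
     (\<forall>l\<in>L. lends l \<subseteq> V \<and> card (lends l) = 2)"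

definition crosses_cut :: "'v set \<Rightarrow> 'v set \<Rightarrow> bool" where
  "crosses_cut X S \<longleftrightarrow> X \<inter> S \<noteq> {} \<and> X - S \<noteq> {}"

definition three_edge_connected ::
  "'v set \<Rightarrow> 'e set \<Rightarrow> ('e \<Rightarrow> 'v set) \<Rightarrow> 'l set \<Rightarrow> ('l \<Rightarrow> 'v set) \<Rightarrow> bool" where
  "three_edge_connected V E ends A lends \<longleftrightarrow>
     (\<forall>S. S \<subseteq> V \<and> S \<noteq> {} \<and> S \<noteq> V \<longrightarrow>
        3 \<le> card {e\<in>E. crosses_cut (ends e) S} + card {l\<in>A. crosses_cut (lends l) S})"

definition cacap_feasible ::
  "'v set \<Rightarrow> 'e set \<Rightarrow> ('e \<Rightarrow> 'v set) \<Rightarrow> 'l set \<Rightarrow> ('l \<Rightarrow> 'v set) \<Rightarrow> 'l set \<Rightarrow> bool" where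
  "cacap_feasible V E ends L lends A \<longleftrightarrow> A \<subseteq> L \<and> three_edge_connected V E ends A lends"

definition cacap_opt ::
  "'v set \<Rightarrow> 'e set \<Rightarrow> ('e \<Rightarrow> 'v set) \<Rightarrow> 'l set \<Rightarrow> ('l \<Rightarrow> 'v set) \<Rightarrow> 'l set \<Rightarrow> bool" where
  "cacap_opt V E ends L lends OPT \<longleftrightarrow> cacap_feasible V E ends L lends OPT \<and>
     (\<forall>A. cacap_feasible V E ends L lends A \<longrightarrow> card OPT \<le> card A)"

definition key_nodes :: "'v set \<Rightarrow> 'e set \<Rightarrow> ('e \<Rightarrow> 'v set) \<Rightarrow> 'v \<Rightarrow> 'v \<Rightarrow> 'v set" where
  "key_nodes V E ends u v = {x \<in> V - {u, v}. 4 \<le> deg E ends x \<and>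
      (\<forall>p. gpath V E ends p \<and> hd p = u \<and> last p = v \<longrightarrow> x \<in> set p)}"

text \<open>Projections of a link: consecutive pairs of v_0, v_1, ..., v_q, v_(q+1), the order
  being the order along a simple path between the endpoints.\<close>
definition projections ::
  "'v set \<Rightarrow> 'e set \<Rightarrow> ('e \<Rightarrow> 'v set) \<Rightarrow> ('l \<Rightarrow> 'v set) \<Rightarrow> 'l \<Rightarrow> 'v set set" where
  "projections V E ends lends l = {{xs ! i, xs ! Suc i} | xs i. Suc i < length xs \<and>
      (\<exists>u v p. lends l = {u, v} \<and> gpath V E ends p \<and> hd p = u \<and> last p = v \<and>
         xs = filter (\<lambda>x. x \<in> key_nodes V E ends u v \<union> {u, v}) p)}"

text \<open>Internal nodes of the path along the cycle (cyclic node list vs) going forward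
  from position i to position j.\<close>
definition arc_internal :: "'v list \<Rightarrow> nat \<Rightarrow> nat \<Rightarrow> 'v set" where
  "arc_internal vs i j = {vs ! ((i + k) mod length vs) | k.
      0 < k \<and> k < (j + length vs - i) mod length vs}"

definition cross_on_cycle :: "'v list \<Rightarrow> 'v set \<Rightarrow> 'v set \<Rightarrow> bool" where
  "cross_on_cycle vs p q \<longleftrightarrow> p \<inter> q \<noteq> {} \<or>
     (\<exists>i<length vs. \<exists>j<length vs. p = {vs ! i, vs ! j} \<and> card (q \<inter> arc_internal vs i j) = 1) \<or>
     (\<exists>i<length vs. \<exists>j<length vs. q = {vs ! i, vs ! j} \<and> card (p \<inter> arc_internal vs i j) = 1)"

definition proj_cross :: "'e set \<Rightarrow> ('e \<Rightarrow> 'v set) \<Rightarrow> 'v set \<Rightarrow> 'v set \<Rightarrow> bool" where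
  "proj_cross E ends p q \<longleftrightarrow> (\<exists>vs es. cycle_witness E ends vs es \<and>
      p \<subseteq> set vs \<and> q \<subseteq> set vs \<and> cross_on_cycle vs p q)"

definition links_cross ::
  "'v set \<Rightarrow> 'e set \<Rightarrow> ('e \<Rightarrow> 'v set) \<Rightarrow> ('l \<Rightarrow> 'v set) \<Rightarrow> 'l \<Rightarrow> 'l \<Rightarrow> bool" where
  "links_cross V E ends lends l l' \<longleftrightarrow>
     (\<exists>p\<in>projections V E ends lends l. \<exists>q\<in>projections V E ends lends l'. proj_cross E ends p q)"

section \<open>Associated Steiner tree instance (nodes: Inl terminal, Inr link)\<close>

definition terminals :: "'v set \<Rightarrow> 'e set \<Rightarrow> ('e \<Rightarrow> 'v set) \<Rightarrow> 'v set" where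
  "terminals V E ends = {v\<in>V. deg E ends v = 2}"

definition st_edges ::
  "'v set \<Rightarrow> 'e set \<Rightarrow> ('e \<Rightarrow> 'v set) \<Rightarrow> 'l set \<Rightarrow> ('l \<Rightarrow> 'v set) \<Rightarrow> ('v + 'l) set set" where
  "st_edges V E ends L lends =
     {{Inr l, Inl v} | l v. l \<in> L \<and> v \<in> lends l \<and> v \<in> terminals V E ends} \<union>
     {{Inr l, Inr l'} | l l'. l \<in> L \<and> l' \<in> L \<and> l \<noteq> l' \<and> links_cross V E ends lends l l'}"

definition tpath :: "'a set set \<Rightarrow> 'a list \<Rightarrow> bool" where
  "tpath F xs \<longleftrightarrow> xs \<noteq> [] \<and> distinct xs \<and> (\<forall>i. Suc i < length xs \<longrightarrow> {xs ! i, xs ! Suc i} \<in> F)"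

definition path_edges :: "'a list \<Rightarrow> 'a set set" where
  "path_edges xs = {{xs ! i, xs ! Suc i} | i. Suc i < length xs}"

definition is_tree :: "'a set \<Rightarrow> 'a set set \<Rightarrow> bool" where
  "is_tree N F \<longleftrightarrow> finite N \<and> N \<noteq> {} \<and> (\<forall>e\<in>F. e \<subseteq> N \<and> card e = 2) \<and>
     (\<forall>x\<in>N. \<forall>y\<in>N. \<exists>xs. tpath F xs \<and> hd xs = x \<and> last xs = y) \<and>
     \<not> (\<exists>xs. 3 \<le> length xs \<and> tpath F xs \<and> {last xs, hd xs} \<in> F)"

definition steiner_tree ::
  "'v set \<Rightarrow> 'e set \<Rightarrow> ('e \<Rightarrow> 'v set) \<Rightarrow> 'l set \<Rightarrow> ('l \<Rightarrow> 'v set) \<Rightarrow>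
   ('v + 'l) set \<Rightarrow> ('v + 'l) set set \<Rightarrow> bool" where
  "steiner_tree V E ends L lends N F \<longleftrightarrow> is_tree N F \<and> F \<subseteq> st_edges V E ends L lends \<and>
     N \<subseteq> Inl ` terminals V E ends \<union> Inr ` L \<and> Inl ` terminals V E ends \<subseteq> N"

definition children :: "'a set set \<Rightarrow> 'a \<Rightarrow> 'a \<Rightarrow> 'a set" where
  "children F r x = {y. \<exists>xs. tpath F (xs @ [x, y]) \<and> hd (xs @ [x, y]) = r}"

definition mark_candidates :: "'v set \<Rightarrow> ('v + 'l) set set \<Rightarrow> ('v + 'l) \<Rightarrow> 'l \<Rightarrow> ('v + 'l) set" where
  "mark_candidates T F r l =
     (if children F r (Inr l) \<inter> Inl ` T \<noteq> {} then children F r (Inr l) \<inter> Inl ` T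
      else children F r (Inr l))"

text \<open>All outcomes of the marking scheme (one choice per Steiner node); independent uniform
  choices = uniform distribution on this product set.\<close>
definition markings :: "'v set \<Rightarrow> 'l set \<Rightarrow> ('v + 'l) set set \<Rightarrow> ('v + 'l) \<Rightarrow> ('l \<Rightarrow> ('v + 'l)) set" where
  "markings T S F r = (\<Pi>\<^sub>E l\<in>S. mark_candidates T F r l)"

definition marked_edges :: "'l set \<Rightarrow> ('l \<Rightarrow> ('v + 'l)) \<Rightarrow> ('v + 'l) set set" where
  "marked_edges S m = {{Inr l, m l} | l. l \<in> S}"

definition W_set :: "'v set \<Rightarrow> 'l set \<Rightarrow> ('v + 'l) set set \<Rightarrow> ('l \<Rightarrow> ('v + 'l)) \<Rightarrow> ('v + 'l) set \<Rightarrow> 'v set set" where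
  "W_set T S F m e = {{a, b} | a b. a \<in> T \<and> b \<in> T \<and> a \<noteq> b \<and>
      (\<exists>xs. tpath F xs \<and> hd xs = Inl a \<and> last xs = Inl b \<and> e \<in> path_edges xs \<and>
            card (path_edges xs - marked_edges S m) = 1)}"

definition w_val :: "'v set \<Rightarrow> 'l set \<Rightarrow> ('v + 'l) set set \<Rightarrow> ('l \<Rightarrow> ('v + 'l)) \<Rightarrow> ('v + 'l) set \<Rightarrow> nat" where
  "w_val T S F m e = card (W_set T S F m e)"

definition c_val :: "'v set \<Rightarrow> 'l set \<Rightarrow> ('v + 'l) set set \<Rightarrow> ('v + 'l) \<Rightarrow> 'l \<Rightarrow> real" where
  "c_val T S F r l = (\<Sum>m\<in>markings T S F r. harm (w_val T S F m {Inr l, m l})) / real (card (markings T S F r))"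

definition Hhat :: "nat \<Rightarrow> real" where
  "Hhat i = (\<Sum>j. harm (i + j) / 2 ^ (j + 1))"

end

theory Submission
  imports Defs
begin


lemma harm_le_n: "harm n \<le> (real n)"
proof (induction n)
  case 0 then show ?case by (simp add: harm_def)
next
  case (Suc n)
  have "inverse (real (Suc n)) \<le> 1" by (simp add: inverse_le_1_iff)
  with Suc show ?case by (simp add: harm_Suc)
qed

lemma summ_lin: "summable (\<lambda>j. (real n + real j) / 2 ^ (j + 1))"
proof (rule summable_ratio_test[where c="3/4" and N=2])
  fix j :: nat assume "2 \<le> j"
  have "(real n + real (Suc j)) \<le> 3/2 * (real n + real j)" using \<open>2 \<le> j\<close> by simp
  moreover have "(0::real) < 2 ^ j" by simp
  ultimately have "(real n + real (Suc j)) * 2 ^ j \<le> 3/2 * (real n + real j) * 2 ^ j"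
    by (intro mult_right_mono) auto
  then have "(real n + real (Suc j)) / 2 ^ (Suc j + 1) \<le> 3/4 * ((real n + real j) / 2 ^ (j + 1))"
    by (simp add: field_simps)
  then show "norm ((real n + real (Suc j)) / 2 ^ (Suc j + 1)) \<le> 3/4 * norm ((real n + real j) / 2 ^ (j + 1))"
    by simp
qed simp

lemma Hhat_summable: "summable (\<lambda>j. harm (i + j) / 2 ^ (j + 1) :: real)"
proof (rule summable_comparison_test[OF _ summ_lin[of i]])
  show "\<exists>N. \<forall>n\<ge>N. norm (harm (i + n) / 2 ^ (n + 1) :: real) \<le> (real i + real n) / 2 ^ (n + 1)"
  proof (intro exI allI impI)
    fix n :: nat assume "0 \<le> n"
    have "harm (i + n) \<le> real i + real n" using harm_le_n[of "i+n"] by simp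
    then show "norm (harm (i + n) / 2 ^ (n + 1) :: real) \<le> (real i + real n) / 2 ^ (n + 1)"
      by (simp add: harm_nonneg divide_right_mono)
  qed
qed

lemma Hhat_rec: "Hhat i = harm i / 2 + Hhat (Suc i) / 2"
proof -
  have s: "summable (\<lambda>j. harm (i + j) / 2 ^ (j + 1) :: real)" by (rule Hhat_summable)
  have "Hhat i = (\<Sum>j. harm (i + Suc j) / 2 ^ (Suc j + 1)) + harm (i + 0) / 2 ^ (0+1)"
    unfolding Hhat_def using suminf_split_head[OF s] by (simp add: suminf_minus_initial_segment s)
  also have "(\<Sum>j. harm (i + Suc j) / 2 ^ (Suc j + 1)) = (\<Sum>j. (harm (Suc i + j) / 2 ^ (j + 1)) / 2)"
    by (simp add: field_simps)
  also have "\<dots> = Hhat (Suc i) / 2" unfolding Hhat_def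
    using suminf_divide[OF Hhat_summable[of "Suc i"], of 2] by simp
  finally show ?thesis by simp
qed

lemma harm_le_Hhat: "harm i \<le> Hhat i"
proof -
  have "(\<lambda>j. harm i / 2 ^ (j+1) :: real) sums (harm i)"
    using sums_mult[OF power_half_series, of "harm i"] by (simp add: field_simps)
  then have "harm i = (\<Sum>j. harm i / 2 ^ (j+1) :: real)" by (simp add: sums_iff)
  also have "\<dots> \<le> Hhat i" unfolding Hhat_def
    using \<open>(\<lambda>j. harm i / 2 ^ (j+1) :: real) sums (harm i)\<close>
    by (intro suminf_le Hhat_summable) (auto simp: sums_iff intro!: divide_right_mono harm_mono)
  finally show ?thesis .
qed

lemma harm_diff_mono: "harm (Suc j + i) - harm (Suc j) \<le> (harm (j + i) - harm j :: real)"
proof (induction i)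
  case 0 then show ?case by simp
next
  case (Suc i)
  have "inverse (real (Suc (Suc j + i))) \<le> inverse (real (Suc (j + i)))"
    by (simp add: field_simps)
  with Suc show ?case by (simp add: harm_Suc)
qed

definition dl :: "nat \<Rightarrow> real" where "dl j = Hhat j - harm j"

lemma dl_series: "dl j = (\<Sum>i. (harm (j + i) - harm j) / 2 ^ (i+1))"
proof -
  have g: "(\<lambda>i. harm j / 2 ^ (i+1) :: real) sums (harm j)"
    using sums_mult[OF power_half_series, of "harm j"] by (simp add: field_simps)
  have "(\<lambda>i. harm (j + i) / 2 ^ (i+1) - harm j / 2 ^ (i+1)) sums (Hhat j - harm j)"
    unfolding Hhat_def by (intro sums_diff g summable_sums Hhat_summable)
  then show ?thesis unfolding dl_def by (simp add: sums_iff diff_divide_distrib)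
qed

lemma dl_summable: "summable (\<lambda>i. (harm (j + i) - harm j) / 2 ^ (i+1) :: real)"
proof -
  have g: "(\<lambda>i. harm j / 2 ^ (i+1) :: real) sums (harm j)"
    using sums_mult[OF power_half_series, of "harm j"] by (simp add: field_simps)
  have "summable (\<lambda>i. harm (j + i) / 2 ^ (i+1) - harm j / 2 ^ (i+1) :: real)"
    by (intro summable_diff Hhat_summable sums_summable[OF g])
  then show ?thesis by (simp add: diff_divide_distrib)
qed

lemma dl_mono: "dl (Suc j) \<le> dl j"
  unfolding dl_series
  by (intro suminf_le dl_summable allI divide_right_mono harm_diff_mono) auto

lemma dl_antimono: "j \<le> j' \<Longrightarrow> dl j' \<le> dl j"
  by (induction rule: dec_induct) (use dl_mono order_trans in blast)+

lemma key_ineq_aux: "Hhat (n + e) - harm n \<le> real (Suc e) * dl n"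
proof (induction e)
  case 0 then show ?case by (simp add: dl_def)
next
  case (Suc e)
  have "Hhat (n + Suc e) = 2 * Hhat (n + e) - harm (n + e)"
    using Hhat_rec[of "n+e"] by simp
  then have "Hhat (n + Suc e) - harm n = (Hhat (n + e) - harm n) + dl (n + e)"
    by (simp add: dl_def)
  also have "\<dots> \<le> real (Suc e) * dl n + dl n" using Suc dl_antimono[of n "n+e"] by simp
  finally show ?case by (simp add: algebra_simps)
qed

lemma key_ineq:
  assumes "1 \<le> D"
  shows "Hhat (n + D - 1) / D + (1 - 1 / D) * harm n \<le> Hhat n"
proof -
  have "Hhat (n + (D - 1)) - harm n \<le> real D * dl n"
    using key_ineq_aux[of n "D - 1"] assms by simp
  then have "Hhat (n + D - 1) \<le> harm n + real D * (Hhat n - harm n)"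
    using assms by (simp add: dl_def)
  then show ?thesis using assms by (simp add: field_simps)
qed



definition mk :: "('l \<Rightarrow> 'v + 'l) \<Rightarrow> ('v + 'l) \<Rightarrow> ('v + 'l) \<Rightarrow> bool" where
  "mk m u p \<longleftrightarrow> (\<exists>l. p = Inr l \<and> m l = u)"

fun Xb :: "(('v + 'l) \<Rightarrow> nat) \<Rightarrow> ('l \<Rightarrow> 'v + 'l) \<Rightarrow> ('v + 'l) list \<Rightarrow> nat" where
  "Xb D m (u # p # rest) = (if mk m u p then D p - 1 + Xb D m (p # rest) else 1)"
| "Xb D m _ = 0"

lemma Xb_indep: "Inr l \<notin> set rest \<Longrightarrow> Xb D (m(l := z)) (p # rest) = Xb D m (p # rest)"
proof (induction rest arbitrary: p)
  case Nil then show ?case by simp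
next
  case (Cons q rest)
  have "mk (m(l := z)) p q = mk m p q" using Cons.prems by (auto simp: mk_def)
  have "Xb D (m(l := z)) (q # rest) = Xb D m (q # rest)" using Cons.prems by (intro Cons.IH) simp
  then show ?case by (simp only: Xb.simps \<open>mk (m(l := z)) p q = mk m p q\<close>)
qed

lemma fiber_sum:
  fixes g :: "('l \<Rightarrow> 'a) \<Rightarrow> real"
  assumes fin: "finite S" "\<forall>l\<in>S. finite (C l)" and lS: "l \<in> S" and uC: "u \<in> C l"
    and inv: "\<And>m z. g (m(l := z)) = g m"
  shows "(\<Sum>m\<in>PiE S C. g m) = real (card (C l)) * (\<Sum>m\<in>{m\<in>PiE S C. m l = u}. g m)"
proof -
  let ?M = "PiE S C"
  have finM: "finite ?M" using fin by (intro finite_PiE) auto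
  have "(\<Sum>m\<in>?M. g m) = (\<Sum>a\<in>C l. \<Sum>m\<in>{m\<in>?M. m l = a}. g m)"
  proof -
    have "(\<lambda>m. m l) ` ?M \<subseteq> C l" using lS by auto
    from sum.group[OF finM _ this, of g] fin lS show ?thesis by simp
  qed
  also have "\<dots> = (\<Sum>a\<in>C l. \<Sum>m\<in>{m\<in>?M. m l = u}. g m)"
  proof (rule sum.cong[OF refl])
    fix a assume a: "a \<in> C l"
    show "(\<Sum>m\<in>{m\<in>?M. m l = a}. g m) = (\<Sum>m\<in>{m\<in>?M. m l = u}. g m)"
    proof (rule sum.reindex_bij_witness[where i="\<lambda>m. m(l := a)" and j="\<lambda>m. m(l := u)"])
      fix m assume "m \<in> {m\<in>?M. m l = a}"
      then show "(m(l := u))(l := a) = m" "m(l := u) \<in> {m\<in>?M. m l = u}" "g (m(l := u)) = g m"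
        using uC lS inv by (auto simp: PiE_iff extensional_def)
    next
      fix m assume "m \<in> {m\<in>?M. m l = u}"
      then show "(m(l := a))(l := u) = m" "m(l := a) \<in> {m\<in>?M. m l = a}"
        using a lS by (auto simp: PiE_iff extensional_def)
    qed
  qed
  finally show ?thesis by simp
qed

lemma prob_bound:
  fixes S :: "'l set" and C :: "'l \<Rightarrow> ('v + 'l) set" and D :: "('v + 'l) \<Rightarrow> nat"
  assumes fin: "finite S" "\<forall>l\<in>S. finite (C l)"
  shows "\<lbrakk> \<forall>i. Suc i < length P \<longrightarrow> (\<exists>l\<in>S. P ! Suc i = Inr l \<and> (P ! i \<in> C l \<longrightarrow> D (P ! Suc i) = card (C l)));
           distinct P; P \<noteq> [] \<rbrakk> \<Longrightarrow>
         (\<Sum>m\<in>PiE S C. harm (k + Xb D m P)) \<le> real (card (PiE S C)) * Hhat (Suc k)"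
proof (induction P arbitrary: k rule: induct_list012)
  case 1 then show ?case by simp
next
  case (2 u)
  have "harm k \<le> (harm (Suc k) :: real)" by (simp add: harm_Suc)
  then have "harm k \<le> Hhat (Suc k)" using harm_le_Hhat[of "Suc k"] by linarith
  then show ?case by (simp add: mult_left_mono)
next
  case (3 u p rest)
  let ?M = "PiE S C"
  have finM: "finite ?M" using fin by (intro finite_PiE) auto
  obtain l where lS: "l \<in> S" and pl: "p = Inr l" and Dp: "u \<in> C l \<Longrightarrow> D p = card (C l)"
    using "3.prems"(1)[rule_format, of 0] by auto
  have IHpre: "\<forall>i. Suc i < length (p # rest) \<longrightarrow> (\<exists>l\<in>S. (p # rest) ! Suc i = Inr l \<and>
      ((p # rest) ! i \<in> C l \<longrightarrow> D ((p # rest) ! Suc i) = card (C l)))"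
    using "3.prems"(1) by (metis Suc_less_eq length_Cons nth_Cons_Suc)
  have dist': "distinct (p # rest)" using "3.prems"(2) by simp
  have notin: "Inr l \<notin> set rest" using dist' pl by simp
  have mkiff: "\<And>m. mk m u p \<longleftrightarrow> m l = u" using pl by (auto simp: mk_def)
  show ?case
  proof (cases "u \<in> C l")
    case False
    have "\<And>m. m \<in> ?M \<Longrightarrow> Xb D m (u # p # rest) = 1"
      using False lS mkiff by (auto simp: PiE_iff)
    then have "(\<Sum>m\<in>?M. harm (k + Xb D m (u # p # rest))) = (\<Sum>m\<in>?M. harm (Suc k))"
      by simp
    also have "\<dots> \<le> real (card ?M) * Hhat (Suc k)"
      using harm_le_Hhat[of "Suc k"] by (simp add: mult_left_mono)
    finally show ?thesis .
  next
    case True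
    define Dv where "Dv = card (C l)"
    have Dv1: "1 \<le> Dv" unfolding Dv_def using True fin lS by (metis One_nat_def Suc_leI card_gt_0_iff empty_iff)
    have Dpv: "D p = Dv" using Dp True Dv_def by simp
    define g :: "('l \<Rightarrow> 'v + 'l) \<Rightarrow> real" where "g m = harm (k + (Dv - 1) + Xb D m (p # rest))" for m
    have ginv: "\<And>m z. g (m(l := z)) = g m" unfolding g_def using Xb_indep[OF notin] by simp
    let ?fib = "{m\<in>?M. m l = u}"
    have fs: "(\<Sum>m\<in>?M. g m) = real Dv * (\<Sum>m\<in>?fib. g m)"
      using fiber_sum[OF fin lS True, of g] ginv Dv_def by simp
    have fc: "real (card ?M) = real Dv * real (card ?fib)"
      using fiber_sum[OF fin lS True, of "\<lambda>_. 1"] Dv_def by simp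
    have IH: "(\<Sum>m\<in>?M. g m) \<le> real (card ?M) * Hhat (Suc (k + (Dv - 1)))"
      unfolding g_def using "3.IH"(2)[OF IHpre dist'] by simp
    have sub: "?fib \<subseteq> ?M" by auto
    have split: "(\<Sum>m\<in>?M. harm (k + Xb D m (u # p # rest))) =
        (\<Sum>m\<in>?fib. harm (k + Xb D m (u # p # rest))) + (\<Sum>m\<in>?M - ?fib. harm (k + Xb D m (u # p # rest)))"
      using sum.subset_diff[OF sub finM] by (simp only: add.commute)
    have s1: "(\<Sum>m\<in>?fib. harm (k + Xb D m (u # p # rest))) = (\<Sum>m\<in>?fib. g m)"
      by (rule sum.cong) (auto simp: g_def mkiff Dpv add.assoc)
    have s2: "(\<Sum>m\<in>?M - ?fib. harm (k + Xb D m (u # p # rest))) = (\<Sum>m\<in>?M - ?fib. harm (Suc k))"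
      by (rule sum.cong) (auto simp: mkiff)
    have c2: "card (?M - ?fib) = card ?M - card ?fib" using finM sub by (simp add: card_Diff_subset finite_subset)
    have cle: "card ?fib \<le> card ?M" using finM sub by (simp add: card_mono)
    have s2': "(\<Sum>m\<in>?M - ?fib. harm (Suc k)) = (real (card ?M) - real (card ?fib)) * harm (Suc k)"
      using c2 cle by (simp add: of_nat_diff)
    have Dpos: "(0::real) < real Dv" using Dv1 by simp
    have fibsum: "(\<Sum>m\<in>?fib. g m) = (\<Sum>m\<in>?M. g m) / real Dv" using fs Dpos by simp
    have fibc: "real (card ?fib) = real (card ?M) / real Dv" using fc Dpos by simp
    have "(\<Sum>m\<in>?M. harm (k + Xb D m (u # p # rest))) =
          (\<Sum>m\<in>?M. g m) / real Dv + (real (card ?M) - real (card ?M) / real Dv) * harm (Suc k)"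
      unfolding split s1 s2 s2' fibsum fibc by (rule refl)
    also have "\<dots> \<le> real (card ?M) * Hhat (Suc (k + (Dv - 1))) / real Dv + (real (card ?M) - real (card ?M) / real Dv) * harm (Suc k)"
      using IH Dpos by (simp add: divide_right_mono)
    also have "\<dots> = real (card ?M) * (Hhat (Suc k + Dv - 1) / real Dv + (1 - 1 / real Dv) * harm (Suc k))"
      using Dv1 by (simp add: field_simps)
    also have "\<dots> \<le> real (card ?M) * Hhat (Suc k)"
      using key_ineq[of Dv "Suc k"] Dv1 by (intro mult_left_mono) auto
    finally show ?thesis .
  qed
qed



lemma tpath_succ: "tpath F xs \<longleftrightarrow> xs \<noteq> [] \<and> distinct xs \<and> successively (\<lambda>a b. {a, b} \<in> F) xs"
  unfolding tpath_def successively_conv_nth by auto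

lemma successively_take: "successively P xs \<Longrightarrow> successively P (take n xs)"
  unfolding successively_conv_nth by auto

lemma successively_drop: "successively P xs \<Longrightarrow> successively P (drop n xs)"
  unfolding successively_conv_nth by auto

lemma tpath_take: "tpath F xs \<Longrightarrow> 0 < n \<Longrightarrow> tpath F (take n xs)"
  unfolding tpath_succ by (auto intro: successively_take)

lemma tpath_drop: "tpath F xs \<Longrightarrow> n < length xs \<Longrightarrow> tpath F (drop n xs)"
  unfolding tpath_succ by (auto intro: successively_drop)

lemma tpath_Cons: "tpath F (x # xs) \<Longrightarrow> xs \<noteq> [] \<Longrightarrow> tpath F xs"
  using tpath_drop[of F "x # xs" 1] by simp

lemma tpath_rev: "tpath F (rev xs) \<longleftrightarrow> tpath F xs"
  unfolding tpath_succ by (auto simp: insert_commute)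

lemma tpath_butlast: "tpath F xs \<Longrightarrow> length xs \<ge> 2 \<Longrightarrow> tpath F (butlast xs)"
  using tpath_take[of F xs "length xs - 1"] by (simp add: butlast_conv_take)

lemma tpath_snoc: "tpath F xs \<Longrightarrow> y \<notin> set xs \<Longrightarrow> {last xs, y} \<in> F \<Longrightarrow> tpath F (xs @ [y])"
  unfolding tpath_succ by (auto simp: successively_append_iff)

definition acyc :: "'a set set \<Rightarrow> bool" where
  "acyc F \<longleftrightarrow> \<not> (\<exists>xs. 3 \<le> length xs \<and> tpath F xs \<and> {last xs, hd xs} \<in> F)"

lemma diverge:
  assumes ac: "acyc F" and px: "tpath F (x # xs)" and py: "tpath F (x # ys)"
    and ne: "xs \<noteq> []" "ys \<noteq> []" and la: "last xs = last ys" and hdn: "hd xs \<noteq> hd ys"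
  shows False
proof -
  define i where "i = (LEAST i. i < length xs \<and> xs ! i \<in> set ys)"
  have ex: "length xs - 1 < length xs \<and> xs ! (length xs - 1) \<in> set ys"
    using ne la by (simp add: last_conv_nth)
  have i1: "i < length xs \<and> xs ! i \<in> set ys" unfolding i_def by (rule LeastI, rule ex)
  have imin: "xs ! i' \<notin> set ys" if "i' < i" for i'
  proof -
    have "\<not> (i' < length xs \<and> xs ! i' \<in> set ys)"
      using not_less_Least[of i' "\<lambda>i. i < length xs \<and> xs ! i \<in> set ys"] that unfolding i_def by blast
    moreover have "i' < length xs" using that i1 by simp
    ultimately show ?thesis by blast
  qed
  obtain j where j: "j < length ys" "ys ! j = xs ! i" using i1 in_set_conv_nth[of "xs ! i" ys] by auto
  define cyc where "cyc = x # take (Suc i) xs @ rev (take j ys)"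
  have dx: "distinct (x # xs)" and dy: "distinct (x # ys)" using px py unfolding tpath_def by auto
  have sx: "successively (\<lambda>a b. {a, b} \<in> F) (x # xs)" and sy: "successively (\<lambda>a b. {a, b} \<in> F) (x # ys)"
    using px py unfolding tpath_succ by auto
  have len: "length cyc = Suc (Suc i) + j" unfolding cyc_def using i1 j by simp
  have ij: "i \<noteq> 0 \<or> j \<noteq> 0"
  proof (rule ccontr)
    assume "\<not> (i \<noteq> 0 \<or> j \<noteq> 0)"
    then have "hd xs = hd ys" using j ne by (simp add: hd_conv_nth)
    with hdn show False by simp
  qed
  have len3: "3 \<le> length cyc" using len ij by auto
  have tk: "take (Suc i) xs = take i xs @ [xs ! i]" using i1 by (simp add: take_Suc_conv_app_nth)
  have dist: "distinct cyc"
  proof -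
    have d1: "distinct (take (Suc i) xs)" using dx by simp
    have d2: "distinct (rev (take j ys))" using dy by simp
    have disj: "set (take (Suc i) xs) \<inter> set (take j ys) = {}"
    proof (rule ccontr)
      assume "set (take (Suc i) xs) \<inter> set (take j ys) \<noteq> {}"
      then obtain z where z1: "z \<in> set (take (Suc i) xs)" and z2: "z \<in> set (take j ys)" by blast
      from z1 obtain i' where i': "i' < Suc i" "i' < length xs" "xs ! i' = z"
        by (auto simp: in_set_conv_nth)
      from z2 obtain j' where j': "j' < j" "ys ! j' = z" by (auto simp: in_set_conv_nth)
      have "z \<in> set ys" using j' j by (metis nth_mem less_trans)
      then have "i' = i" using imin i' by (metis less_SucE)
      then have "ys ! j' = ys ! j" using i' j' j by simp
      moreover have "distinct ys" using dy by simp
      ultimately have "j' = j" using nth_eq_iff_index_eq[of ys j' j] j j' by auto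
      then show False using j' by simp
    qed
    have "x \<notin> set (take (Suc i) xs)" "x \<notin> set (take j ys)" using dx dy by (auto dest: in_set_takeD)
    then show ?thesis unfolding cyc_def using d1 d2 disj by auto
  qed
  have succ: "successively (\<lambda>a b. {a, b} \<in> F) cyc"
  proof -
    have a: "successively (\<lambda>a b. {a, b} \<in> F) (x # take (Suc i) xs)"
      using successively_take[OF sx, of "Suc (Suc i)"] by simp
    have b0: "successively (\<lambda>a b. {a, b} \<in> F) (take j ys)"
      using successively_take[OF successively_drop[OF sy, of 1], of j] by simp
    have b: "successively (\<lambda>a b. {a, b} \<in> F) (rev (take j ys))"
      unfolding successively_rev by (rule successively_mono[OF b0]) (simp add: insert_commute)
    have c: "{xs ! i, ys ! (j - 1)} \<in> F" if "j > 0"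
    proof -
      have "{(x # ys) ! j, (x # ys) ! Suc j} \<in> F" by (rule successively_nth[OF sy]) (use j in simp)
      then show ?thesis using that j by (cases j) (auto simp: insert_commute)
    qed
    have lst: "last (x # take (Suc i) xs) = xs ! i" using tk by simp
    have hdr: "hd (rev (take j ys)) = ys ! (j - 1)" if j0: "j > 0"
    proof -
      obtain j' where "j = Suc j'" using j0 gr0_implies_Suc by blast
      then have tj: "take j ys = take j' ys @ [ys ! j']" using j take_Suc_conv_app_nth[of j' ys] by simp
      have "hd (rev (take j ys)) = last (take j ys)" by (rule hd_rev)
      also have "\<dots> = ys ! j'" unfolding tj by (rule last_snoc)
      finally show ?thesis using \<open>j = Suc j'\<close> by simp
    qed
    have eqc: "cyc = (x # take (Suc i) xs) @ rev (take j ys)" by (simp add: cyc_def)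
    have jn: "x # take (Suc i) xs = [] \<or> rev (take j ys) = [] \<or>
        {last (x # take (Suc i) xs), hd (rev (take j ys))} \<in> F"
    proof (cases "j = 0")
      case True then show ?thesis by simp
    next
      case False
      then have j0: "0 < j" by simp
      have "{last (x # take (Suc i) xs), hd (rev (take j ys))} \<in> F"
        unfolding lst hdr[OF j0] using c[OF j0] .
      then show ?thesis by blast
    qed
    show ?thesis unfolding eqc successively_append_iff using a b jn by blast
  qed
  have cl: "{last cyc, hd cyc} \<in> F"
  proof -
    have e0: "{x, ys ! 0} \<in> F" using sy ne by (cases ys) auto
    have "last cyc = ys ! 0"
    proof (cases j)
      case 0 then show ?thesis using j tk unfolding cyc_def by simp
    next
      case (Suc j')
      have ne2: "rev (take j ys) \<noteq> []" using Suc ne by simp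
      have "last cyc = last (rev (take j ys))" unfolding cyc_def
        using last_appendR[OF ne2, of "x # take (Suc i) xs"] by simp
      also have "\<dots> = hd (take j ys)" by (simp add: last_rev)
      also have "\<dots> = ys ! 0" using Suc ne by (simp add: hd_conv_nth)
      finally show ?thesis .
    qed
    then show ?thesis using e0 unfolding cyc_def by (simp add: insert_commute)
  qed
  have "tpath F cyc" unfolding tpath_succ using dist succ by (simp add: cyc_def)
  then show False using ac len3 cl unfolding acyc_def by blast
qed

lemma tpath_uniq:
  assumes ac: "acyc F"
  shows "tpath F xs \<Longrightarrow> tpath F ys \<Longrightarrow> hd xs = hd ys \<Longrightarrow> last xs = last ys \<Longrightarrow> xs = ys"
proof (induction xs arbitrary: ys)
  case Nil then show ?case by (simp add: tpath_def)
next
  case (Cons x xs')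
  obtain ys' where ys: "ys = x # ys'" using Cons.prems unfolding tpath_def by (cases ys) auto
  have dx: "distinct (x # xs')" and dy: "distinct (x # ys')" using Cons.prems ys unfolding tpath_def by auto
  show ?case
  proof (cases "xs' = []")
    case True
    then have "last ys = x" using Cons.prems by simp
    have "ys' = []"
    proof (rule ccontr)
      assume ne: "ys' \<noteq> []"
      then have "last ys' = x" using \<open>last ys = x\<close> ys by simp
      then have "x \<in> set ys'" using ne last_in_set by metis
      then show False using dy by simp
    qed
    then show ?thesis using True ys by simp
  next
    case False
    have ys'ne: "ys' \<noteq> []"
    proof
      assume "ys' = []"
      then have "last xs' = x" using Cons.prems ys False by simp
      then have "x \<in> set xs'" using False last_in_set by metis
      then show False using dx by simp
    qed
    have tys: "tpath F (x # ys')" using Cons.prems(2) ys by simp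
    have lst: "last xs' = last ys'" using Cons.prems(4) ys False ys'ne by simp
    have hh: "hd xs' = hd ys'"
      using diverge[OF ac Cons.prems(1) tys False ys'ne lst] by blast
    have "xs' = ys'"
      using Cons.IH[OF tpath_Cons[OF Cons.prems(1) False] tpath_Cons[OF tys ys'ne] hh lst] .
    then show ?thesis using ys by simp
  qed
qed

fun pch :: "'a set set \<Rightarrow> 'a \<Rightarrow> 'a list \<Rightarrow> bool" where
  "pch F r [] = False"
| "pch F r [u] = (u = r)"
| "pch F r (u # p # rest) = (u \<in> children F r p \<and> u \<notin> set (p # rest) \<and> pch F r (p # rest))"

lemma pch_rev: "tpath F xs \<Longrightarrow> hd xs = r \<Longrightarrow> pch F r (rev xs)"
proof (induction xs rule: rev_induct)
  case Nil then show ?case by (simp add: tpath_def)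
next
  case (snoc y ys)
  show ?case
  proof (cases ys rule: rev_cases)
    case Nil then show ?thesis using snoc by simp
  next
    case (snoc zs z)
    have tp0: "tpath F (butlast (ys @ [y]))" using tpath_butlast[OF snoc.prems(1)] \<open>ys = zs @ [z]\<close> by simp
    have tp: "tpath F ys" using tp0 by simp
    have hd: "hd ys = r" using snoc.prems \<open>ys = zs @ [z]\<close> by (cases zs) auto
    have ch: "y \<in> children F r z"
      unfolding children_def using snoc.prems \<open>ys = zs @ [z]\<close> by (intro CollectI exI[of _ zs]) auto
    have "y \<notin> set ys" using snoc.prems(1) unfolding tpath_def by simp
    then show ?thesis using ch snoc.IH[OF tp hd] \<open>ys = zs @ [z]\<close> by simp
  qed
qed

locale rtree =
  fixes N :: "'a set" and F :: "'a set set" and r :: 'a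
  assumes tree: "is_tree N F" and rootN: "r \<in> N"
begin

lemma ac: "acyc F" using tree unfolding is_tree_def acyc_def by blast

lemma finN: "finite N" using tree unfolding is_tree_def by blast

lemma edge: "e \<in> F \<Longrightarrow> e \<subseteq> N \<and> card e = 2" using tree unfolding is_tree_def by blast

lemma finF: "finite F"
proof -
  have "F \<subseteq> Pow N" using edge by blast
  then show ?thesis using finN by (meson finite_Pow_iff finite_subset)
qed

lemma rp_ex: "x \<in> N \<Longrightarrow> \<exists>xs. tpath F xs \<and> hd xs = r \<and> last xs = x"
  using tree rootN unfolding is_tree_def by blast

lemma uniq: "tpath F xs \<Longrightarrow> tpath F ys \<Longrightarrow> hd xs = hd ys \<Longrightarrow> last xs = last ys \<Longrightarrow> xs = ys"
  using tpath_uniq[OF ac] by blast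

lemma child_edge: "y \<in> children F r x \<Longrightarrow> {x, y} \<in> F \<and> x \<noteq> y"
proof -
  assume "y \<in> children F r x"
  then obtain xs where "tpath F (xs @ [x, y])" unfolding children_def by blast
  then have d: "distinct (xs @ [x, y])" and
    e: "{(xs @ [x, y]) ! length xs, (xs @ [x, y]) ! Suc (length xs)} \<in> F"
    unfolding tpath_def by auto
  then show ?thesis by (auto simp: nth_append)
qed

lemma child_N: "y \<in> children F r x \<Longrightarrow> x \<in> N \<and> y \<in> N"
  using child_edge edge by blast

lemma root_not_child: "r \<notin> children F r x"
proof
  assume "r \<in> children F r x"
  then obtain xs where p: "tpath F (xs @ [x, r])" "hd (xs @ [x, r]) = r" unfolding children_def by blast
  then have "distinct (xs @ [x, r])" unfolding tpath_def by blast
  then show False using p(2) by (cases xs) auto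
qed

lemma parent_uniq: "y \<in> children F r x \<Longrightarrow> y \<in> children F r x' \<Longrightarrow> x = x'"
proof -
  assume "y \<in> children F r x" "y \<in> children F r x'"
  then obtain xs xs' where p: "tpath F (xs @ [x, y])" "hd (xs @ [x, y]) = r"
     "tpath F (xs' @ [x', y])" "hd (xs' @ [x', y]) = r" unfolding children_def by blast
  have "xs @ [x, y] = xs' @ [x', y]" using uniq[OF p(1) p(3)] p by simp
  then show "x = x'" by simp
qed

lemma edge_dir:
  assumes e: "{x, y} \<in> F"
  shows "y \<in> children F r x \<or> x \<in> children F r y"
proof -
  have xyN: "x \<in> N" "y \<in> N" and xy: "x \<noteq> y" using edge[OF e] by (auto simp: card_2_iff)
  obtain xs where xs: "tpath F xs" "hd xs = r" "last xs = x" using rp_ex[OF xyN(1)] by blast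
  have xsne: "xs \<noteq> []" using xs unfolding tpath_def by blast
  show ?thesis
  proof (cases "y \<in> set xs")
    case False
    have "tpath F (xs @ [y])" using tpath_snoc[OF xs(1) False] xs e by simp
    moreover have "xs @ [y] = butlast xs @ [x, y]"
    proof -
      have "butlast xs @ [x] = xs" using append_butlast_last_id[OF xsne] xs(3) by simp
      then show ?thesis by (metis append.assoc append_Cons append_Nil)
    qed
    moreover have "hd (butlast xs @ [x, y]) = r"
    proof -
      have "hd (xs @ [y]) = r" using xsne xs(2) by simp
      then show ?thesis using calculation(2) by simp
    qed
    ultimately have "y \<in> children F r x" unfolding children_def
      by (intro CollectI exI[of _ "butlast xs"]) auto
    then show ?thesis by blast
  next
    case True
    then obtain j where j: "j < length xs" "xs ! j = y" by (auto simp: in_set_conv_nth)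
    have jn: "j \<noteq> length xs - 1" using j xs(3) xy xsne by (auto simp: last_conv_nth)
    show ?thesis
    proof (cases "Suc j = length xs - 1")
      case True
      have d1: "drop j xs = xs ! j # drop (Suc j) xs" by (rule Cons_nth_drop_Suc[symmetric]) (use j in simp)
      have d2: "drop (Suc j) xs = xs ! Suc j # drop (Suc (Suc j)) xs" by (rule Cons_nth_drop_Suc[symmetric]) (use True in simp)
      have d3: "drop (Suc (Suc j)) xs = []" using True by simp
      have xsd: "xs = take j xs @ [xs ! j, xs ! Suc j]" using d1 d2 d3 append_take_drop_id[of j xs] by simp
      moreover have "xs ! Suc j = x" using True xs(3) xsne by (simp add: last_conv_nth)
      ultimately have eq: "xs = take j xs @ [y, x]" using j by simp
      have "tpath F (take j xs @ [y, x])" "hd (take j xs @ [y, x]) = r"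
        using xs(1,2) eq by simp_all
      then have "x \<in> children F r y" unfolding children_def by blast
      then show ?thesis by blast
    next
      case False
      have l3: "3 \<le> length (drop j xs)" using False jn j by auto
      have tp: "tpath F (drop j xs)" using tpath_drop[OF xs(1) j(1)] .
      have "hd (drop j xs) = y" using j by (simp add: hd_drop_conv_nth)
      moreover have "last (drop j xs) = x" using xs(3) j by simp
      ultimately show ?thesis using ac l3 tp e unfolding acyc_def by (auto simp: insert_commute)
    qed
  qed
qed

lemma rpath_pch: "x \<in> N \<Longrightarrow> \<exists>P. pch F r P \<and> hd P = x"
proof -
  assume "x \<in> N"
  then obtain xs where xs: "tpath F xs" "hd xs = r" "last xs = x" using rp_ex by blast
  then have "xs \<noteq> []" unfolding tpath_def by blast
  then show ?thesis using pch_rev[OF xs(1,2)] xs(3) by (intro exI[of _ "rev xs"]) (simp add: hd_rev)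
qed

end



definition mch :: "'l set \<Rightarrow> ('l \<Rightarrow> 'v + 'l) \<Rightarrow> ('v + 'l) list \<Rightarrow> bool" where
  "mch S m ys \<longleftrightarrow> ys \<noteq> [] \<and> successively (\<lambda>x y. \<exists>l\<in>S. x = Inr l \<and> y = m l) ys \<and> (\<exists>t. last ys = Inl t)"

lemma mch_Cons: "mch S m (y # ys) \<longleftrightarrow>
   (if ys = [] then (\<exists>t. y = Inl t) else (\<exists>l\<in>S. y = Inr l \<and> hd ys = m l) \<and> mch S m ys)"
  by (cases ys) (auto simp: mch_def)

lemma mch_uniq: "mch S m xs \<Longrightarrow> mch S m ys \<Longrightarrow> hd xs = hd ys \<Longrightarrow> xs = ys"
proof (induction xs arbitrary: ys)
  case Nil then show ?case by (simp add: mch_def)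
next
  case (Cons x xs')
  obtain ys' where ys: "ys = x # ys'" using Cons.prems by (cases ys) (auto simp: mch_def)
  show ?case
  proof (cases "xs' = []")
    case True
    then obtain t where "x = Inl t" using Cons.prems(1) by (auto simp: mch_Cons)
    then have "ys' = []" using Cons.prems(2) ys by (auto simp: mch_Cons split: if_splits)
    then show ?thesis using True ys by simp
  next
    case False
    then obtain l where l: "x = Inr l" "hd xs' = m l" "mch S m xs'" using Cons.prems(1) by (auto simp: mch_Cons)
    have "ys' \<noteq> []" using Cons.prems(2) ys l by (auto simp: mch_Cons)
    then obtain l' where l': "x = Inr l'" "hd ys' = m l'" "mch S m ys'" using Cons.prems(2) ys by (auto simp: mch_Cons)
    have "xs' = ys'" using Cons.IH[OF l(3) l'(3)] l l' by simp
    then show ?thesis using ys by simp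
  qed
qed

definition mend :: "'l set \<Rightarrow> ('l \<Rightarrow> 'v + 'l) \<Rightarrow> ('v + 'l) \<Rightarrow> ('v + 'l)" where
  "mend S m x = last (THE ys. mch S m ys \<and> hd ys = x)"

lemma mend_eq: "mch S m ys \<Longrightarrow> mend S m (hd ys) = last ys"
proof -
  assume a: "mch S m ys"
  have "(THE zs. mch S m zs \<and> hd zs = hd ys) = ys"
    using a mch_uniq by (intro the_equality) auto
  then show ?thesis unfolding mend_def by simp
qed

lemma path_struct:
  assumes tp: "tpath F xs" and ha: "hd xs = Inl a" and lb: "last xs = Inl b"
    and f: "path_edges xs - marked_edges S m = {f}"
  shows "\<exists>k. Suc k < length xs \<and> f = {xs ! k, xs ! Suc k} \<and> mch S m (rev (take (Suc k) xs)) \<and> mch S m (drop (Suc k) xs)"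
proof -
  have "f \<in> path_edges xs" using f by blast
  then obtain k where k: "Suc k < length xs" "f = {xs ! k, xs ! Suc k}" unfolding path_edges_def by blast
  have dist: "distinct xs" and xsne: "xs \<noteq> []" using tp unfolding tpath_def by auto
  have x0: "xs ! 0 = Inl a" using ha xsne by (simp add: hd_conv_nth)
  have xl: "xs ! (length xs - 1) = Inl b" using lb xsne by (simp add: last_conv_nth)
  have edges_ne: "i = j" if "Suc i < length xs" "Suc j < length xs" "{xs ! i, xs ! Suc i} = {xs ! j, xs ! Suc j}" for i j
  proof -
    have "(xs ! i = xs ! j \<and> xs ! Suc i = xs ! Suc j) \<or> (xs ! i = xs ! Suc j \<and> xs ! Suc i = xs ! j)"
      using that(3) by (simp add: doubleton_eq_iff)
    then show ?thesis
    proof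
      assume "xs ! i = xs ! j \<and> xs ! Suc i = xs ! Suc j"
      then show ?thesis using nth_eq_iff_index_eq[OF dist, of i j] that by simp
    next
      assume h: "xs ! i = xs ! Suc j \<and> xs ! Suc i = xs ! j"
      then have "i = Suc j" using nth_eq_iff_index_eq[OF dist, of i "Suc j"] that by simp
      moreover have "Suc i = j" using h nth_eq_iff_index_eq[OF dist, of "Suc i" j] that by simp
      ultimately show ?thesis by simp
    qed
  qed
  have marked: "{xs ! i, xs ! Suc i} \<in> marked_edges S m" if "Suc i < length xs" "i \<noteq> k" for i
  proof -
    have pe: "{xs ! i, xs ! Suc i} \<in> path_edges xs" using that(1) unfolding path_edges_def by blast
    have ne: "{xs ! i, xs ! Suc i} \<noteq> f"
    proof
      assume "{xs ! i, xs ! Suc i} = f"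
      then have "i = k" using edges_ne[OF that(1) k(1)] k(2) by simp
      then show False using that(2) by simp
    qed
    show ?thesis
    proof (rule ccontr)
      assume "{xs ! i, xs ! Suc i} \<notin> marked_edges S m"
      then have "{xs ! i, xs ! Suc i} \<in> path_edges xs - marked_edges S m" using pe by simp
      then show False using f ne by simp
    qed
  qed
  define dm where "dm i \<longleftrightarrow> (\<exists>l\<in>S. xs ! i = Inr l \<and> xs ! Suc i = m l)" for i
  define um where "um i \<longleftrightarrow> (\<exists>l\<in>S. xs ! Suc i = Inr l \<and> xs ! i = m l)" for i
  have me: "dm i \<or> um i" if mem: "{xs ! i, xs ! Suc i} \<in> marked_edges S m" for i
  proof -
    obtain l where "l \<in> S" "{xs ! i, xs ! Suc i} = {Inr l, m l}" using mem unfolding marked_edges_def by blast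
    then show ?thesis unfolding dm_def um_def by (auto simp: doubleton_eq_iff)
  qed
  have r2: False if h: "Suc (Suc i) < length xs" "um i" "dm (Suc i)" for i
  proof -
    obtain l where l: "xs ! Suc i = Inr l" "xs ! i = m l" using h(2) unfolding um_def by blast
    obtain l' where l': "xs ! Suc i = Inr l'" "xs ! Suc (Suc i) = m l'" using h(3) unfolding dm_def by blast
    have "xs ! i = xs ! Suc (Suc i)" using l l' by simp
    then show False using nth_eq_iff_index_eq[OF dist, of i "Suc (Suc i)"] h(1) by simp
  qed
  have U: "um i" if "i < k" for i
    using that
  proof (induction i)
    case 0
    have "\<not> dm 0" unfolding dm_def using x0 by auto
    then show ?case using me[OF marked[of 0]] 0 k by auto
  next
    case (Suc i)
    have "um i" using Suc by simp
    moreover have "dm (Suc i) \<or> um (Suc i)" using me[OF marked[of "Suc i"]] Suc k by auto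
    ultimately show ?case using r2[of i] Suc k by auto
  qed
  have Dn: "dm (length xs - 2 - d)" if "k < length xs - 2 - d" for d
    using that
  proof (induction d)
    case 0
    have "\<not> um (length xs - 2)" unfolding um_def using xl k
      by (auto simp: Suc_diff_Suc numeral_2_eq_2)
    moreover have "dm (length xs - 2) \<or> um (length xs - 2)" using me[OF marked[of "length xs - 2"]] 0 k by auto
    ultimately show ?case by simp
  next
    case (Suc d)
    define i where "i = length xs - 2 - Suc d"
    have si: "Suc i = length xs - 2 - d" using Suc.prems unfolding i_def by simp
    have "dm (Suc i)" using Suc.IH Suc.prems si by simp
    moreover have "dm i \<or> um i" using me[OF marked[of i]] Suc.prems unfolding i_def by auto
    moreover have "Suc (Suc i) < length xs" using si Suc.prems k by simp
    ultimately have "dm i" using r2[of i] by auto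
    then show ?case unfolding i_def .
  qed
  have D: "dm i" if h: "k < i" "Suc i < length xs" for i
  proof -
    have e: "length xs - 2 - (length xs - 2 - i) = i" using h by simp
    show ?thesis using Dn[of "length xs - 2 - i", unfolded e] h by blast
  qed
  have m1: "mch S m (drop (Suc k) xs)"
    unfolding mch_def successively_conv_nth
  proof (intro conjI allI impI)
    show "drop (Suc k) xs \<noteq> []" using k by simp
    show "\<exists>t. last (drop (Suc k) xs) = Inl t" using k lb xsne by simp
    fix j assume "Suc j < length (drop (Suc k) xs)"
    then have "dm (Suc k + j)" using D[of "Suc k + j"] by simp
    then show "\<exists>l\<in>S. drop (Suc k) xs ! j = Inr l \<and> drop (Suc k) xs ! Suc j = m l"
      unfolding dm_def using k by simp
  qed
  have m2: "mch S m (rev (take (Suc k) xs))"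
    unfolding mch_def successively_conv_nth
  proof (intro conjI allI impI)
    show "rev (take (Suc k) xs) \<noteq> []" using k xsne by simp
    show "\<exists>t. last (rev (take (Suc k) xs)) = Inl t" using ha xsne by (simp add: last_rev)
    fix j assume j: "Suc j < length (rev (take (Suc k) xs))"
    then have jk: "Suc j < Suc k" using k by simp
    have "um (k - Suc j)" using U[of "k - Suc j"] jk by simp
    moreover have "rev (take (Suc k) xs) ! j = xs ! (k - j)" using j k by (simp add: rev_nth)
    moreover have "rev (take (Suc k) xs) ! Suc j = xs ! (k - Suc j)" using j k by (simp add: rev_nth)
    moreover have "Suc (k - Suc j) = k - j" using jk by simp
    ultimately show "\<exists>l\<in>S. rev (take (Suc k) xs) ! j = Inr l \<and> rev (take (Suc k) xs) ! Suc j = m l"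
      unfolding um_def by metis
  qed
  show ?thesis using k m1 m2 by blast
qed



fun ch :: "('l \<Rightarrow> 'v + 'l) \<Rightarrow> ('v + 'l) list \<Rightarrow> ('v + 'l) set" where
  "ch m [] = {}"
| "ch m [u] = {u}"
| "ch m (u # p # rest) = insert u (if mk m u p then ch m (p # rest) else {})"

lemma hd_in_ch: "P \<noteq> [] \<Longrightarrow> hd P \<in> ch m P"
  by (induction m P rule: ch.induct) auto

definition unm :: "('v + 'l) set set \<Rightarrow> 'l set \<Rightarrow> ('l \<Rightarrow> 'v + 'l) \<Rightarrow> ('v + 'l) \<Rightarrow> ('v + 'l) set set" where
  "unm F S m u = {f \<in> F - marked_edges S m. u \<in> f}"

lemma card1_eq: "card A = 1 \<Longrightarrow> a \<in> A \<Longrightarrow> b \<in> A \<Longrightarrow> a = b"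
  by (metis card_1_singletonE singletonD)

locale cst = rtree N F "Inr r" for N :: "('v + 'l) set" and F :: "('v + 'l) set set" and r :: 'l +
  fixes T :: "'v set" and S :: "'l set"
  assumes Ndef: "N = Inl ` T \<union> Inr ` S"
    and leaf: "\<forall>t\<in>T. card {e\<in>F. Inl t \<in> e} = 1"
begin

lemma no_child_Inl: "y \<notin> children F (Inr r) (Inl t)"
proof
  assume y: "y \<in> children F (Inr r) (Inl t)"
  then obtain xs where p: "tpath F (xs @ [Inl t, y])" "hd (xs @ [Inl t, y]) = Inr r"
    unfolding children_def by blast
  have xsne: "xs \<noteq> []" using p(2) by auto
  have d: "distinct (xs @ [Inl t, y])" using p(1) unfolding tpath_def by blast
  have sc: "successively (\<lambda>a b. {a, b} \<in> F) (xs @ [Inl t, y])" using p(1) unfolding tpath_succ by blast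
  have e1: "{last xs, Inl t} \<in> F" using sc xsne by (simp add: successively_append_iff)
  have e2: "{Inl t, y} \<in> F" using sc by (simp add: successively_append_iff)
  have "Inl t \<in> N" using child_N[OF y] by blast
  then have tT: "t \<in> T" using Ndef by auto
  have "{last xs, Inl t} = {Inl t, y}"
    using card1_eq[OF leaf[rule_format, OF tT]] e1 e2 by blast
  moreover have "last xs \<noteq> Inl t"
  proof
    assume "last xs = Inl t"
    moreover have "last xs \<in> set xs" using xsne by simp
    ultimately have "Inl t \<in> set xs" by simp
    then show False using d by simp
  qed
  ultimately have "last xs = y" by (auto simp: doubleton_eq_iff)
  moreover have "last xs \<in> set xs" using xsne by simp
  ultimately show False using d by auto
qed

lemma child_Inr: "y \<in> children F (Inr r) x \<Longrightarrow> \<exists>l\<in>S. x = Inr l"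
proof -
  assume y: "y \<in> children F (Inr r) x"
  then have "x \<in> N" using child_N by blast
  then show ?thesis using Ndef no_child_Inl y by auto
qed

lemma fin_children: "finite (children F (Inr r) x)"
proof -
  have "children F (Inr r) x \<subseteq> N" using child_N by blast
  then show ?thesis using finN finite_subset by blast
qed

lemma pch_nth: "pch F (Inr r) P \<Longrightarrow> Suc i < length P \<Longrightarrow> P ! i \<in> children F (Inr r) (P ! Suc i)"
proof (induction P arbitrary: i rule: induct_list012)
  case (3 u p rest)
  show ?case
  proof (cases i)
    case 0 then show ?thesis using "3.prems" by simp
  next
    case (Suc i') then show ?thesis using "3.IH"(2)[of i'] "3.prems" by simp
  qed
qed auto

lemma pch_distinct: "pch F (Inr r) P \<Longrightarrow> distinct P"
  by (induction P rule: induct_list012) auto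

lemma pch_ne: "pch F (Inr r) P \<Longrightarrow> P \<noteq> []"
  by (cases P) auto

lemma ch_step:
  assumes mok: "\<forall>l\<in>S. m l \<in> children F (Inr r) (Inr l)"
  shows "pch F (Inr r) P \<Longrightarrow> y \<in> ch m P \<Longrightarrow> l \<in> S \<Longrightarrow> y = m l \<Longrightarrow> Inr l \<in> ch m P"
proof (induction P rule: induct_list012)
  case 1 then show ?case by simp
next
  case (2 u)
  then have "y = Inr r" by simp
  then show ?case using "2.prems" mok root_not_child by metis
next
  case (3 u p rest)
  have pc: "pch F (Inr r) (p # rest)" using "3.prems" by simp
  show ?case
  proof (cases "y = u")
    case True
    have "u \<in> children F (Inr r) p" using "3.prems" by simp
    moreover have "u \<in> children F (Inr r) (Inr l)" using mok "3.prems" True by simp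
    ultimately have pl: "p = Inr l" using parent_uniq by blast
    then have "mk m u p" using True "3.prems" by (simp add: mk_def)
    then show ?thesis using hd_in_ch[of "p # rest" m] pl by simp
  next
    case False
    then have "mk m u p" "y \<in> ch m (p # rest)" using "3.prems" by (auto split: if_splits)
    then show ?thesis using "3.IH"(2)[OF pc _ "3.prems"(3,4)] by simp
  qed
qed

lemma mch_ch:
  assumes mok: "\<forall>l\<in>S. m l \<in> children F (Inr r) (Inr l)" and pc: "pch F (Inr r) P" and hP: "hd P = Inr l0"
  shows "mch S m ys \<Longrightarrow> Inr l0 \<in> set ys \<Longrightarrow> hd ys \<in> ch m P"
proof (induction ys)
  case Nil then show ?case by simp
next
  case (Cons y ys')
  show ?case
  proof (cases "y = Inr l0")
    case True then show ?thesis using hd_in_ch[OF pch_ne[OF pc]] hP by simp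
  next
    case False
    then have ne: "ys' \<noteq> []" using Cons.prems by auto
    then obtain l where l: "l \<in> S" "y = Inr l" "hd ys' = m l" "mch S m ys'" using Cons.prems(1) by (auto simp: mch_Cons)
    have "hd ys' \<in> ch m P" using Cons.IH[OF l(4)] Cons.prems False by simp
    then have "Inr l \<in> ch m P" using ch_step[OF mok pc _ l(1) l(3)] by simp
    then show ?thesis using l by simp
  qed
qed

lemma edges_at:
  assumes fF: "f \<in> F" and uf: "u \<in> f"
  shows "\<exists>v. f = {u, v} \<and> (v \<in> children F (Inr r) u \<or> u \<in> children F (Inr r) v)"
proof -
  obtain v where v: "f = {u, v}" "u \<noteq> v" using edge[OF fF] uf by (metis card_2_iff doubleton_eq_iff insert_iff singletonD)
  then show ?thesis using edge_dir fF by blast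
qed

lemma unm_bound:
  assumes mok: "\<forall>l\<in>S. m l \<in> children F (Inr r) (Inr l)" and lS: "l \<in> S" and u: "u = Inr l"
    and par: "u = Inr r \<or> u \<in> children F (Inr r) p"
  shows "card (unm F S m u) \<le> card (children F (Inr r) u) - 1 +
           (if u \<noteq> Inr r \<and> \<not> mk m u p then 1 else 0)"
proof -
  let ?C = "children F (Inr r) u"
  have mlC: "m l \<in> ?C" using mok lS u by simp
  have mlME: "{u, m l} \<in> marked_edges S m" unfolding marked_edges_def using lS u by blast
  define PE where "PE = (if u \<noteq> Inr r \<and> \<not> mk m u p then {{u, p}} else {})"
  have sub: "unm F S m u \<subseteq> (\<lambda>c. {u, c}) ` (?C - {m l}) \<union> PE"
  proof
    fix f assume f: "f \<in> unm F S m u"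
    then have fF: "f \<in> F" and fME: "f \<notin> marked_edges S m" and uf: "u \<in> f" unfolding unm_def by auto
    obtain v where v: "f = {u, v}" "v \<in> ?C \<or> u \<in> children F (Inr r) v" using edges_at[OF fF uf] by blast
    show "f \<in> (\<lambda>c. {u, c}) ` (?C - {m l}) \<union> PE"
    proof (cases "v \<in> ?C")
      case True
      have "v \<noteq> m l" using fME mlME v by blast
      then show ?thesis using True v by blast
    next
      case False
      then have uv: "u \<in> children F (Inr r) v" using v by blast
      then have ur: "u \<noteq> Inr r" using root_not_child by blast
      then have "u \<in> children F (Inr r) p" using par by blast
      then have vp: "v = p" using parent_uniq uv by blast
      have "\<not> mk m u p"
      proof
        assume "mk m u p"
        then obtain l' where l': "p = Inr l'" "m l' = u" unfolding mk_def by blast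
        have "Inr l' \<in> N" using child_N uv vp l' by blast
        then have "l' \<in> S" using Ndef by auto
        then have "{p, u} \<in> marked_edges S m" unfolding marked_edges_def using l' by blast
        then show False using fME v vp by (simp add: insert_commute)
      qed
      then show ?thesis using ur v vp unfolding PE_def by simp
    qed
  qed
  have fC: "finite ?C" by (rule fin_children)
  have "card (unm F S m u) \<le> card ((\<lambda>c. {u, c}) ` (?C - {m l}) \<union> PE)"
    using sub fC unfolding PE_def by (intro card_mono) auto
  also have "\<dots> \<le> card ((\<lambda>c. {u, c}) ` (?C - {m l})) + card PE" by (rule card_Un_le)
  also have "card ((\<lambda>c. {u, c}) ` (?C - {m l})) \<le> card (?C - {m l})" using fC by (intro card_image_le) auto
  also have "card (?C - {m l}) = card ?C - 1" using mlC fC by simp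
  finally show ?thesis unfolding PE_def by (auto split: if_splits)
qed

lemma count_bound:
  assumes mok: "\<forall>l\<in>S. m l \<in> children F (Inr r) (Inr l)"
  shows "pch F (Inr r) P \<Longrightarrow> hd P \<in> Inr ` S \<Longrightarrow>
    card (\<Union>y\<in>ch m P. unm F S m y) \<le> card (children F (Inr r) (hd P)) - 1 + Xb (\<lambda>x. card (children F (Inr r) x)) m P"
proof (induction P rule: induct_list012)
  case 1 then show ?case by simp
next
  case (2 u)
  then obtain l where l: "l \<in> S" "u = Inr l" by auto
  have "u = Inr r" using "2.prems" by simp
  then show ?case using unm_bound[OF mok l(1) l(2), of undefined] by simp
next
  case (3 u p rest)
  let ?D = "\<lambda>x. card (children F (Inr r) x)"
  obtain l where l: "l \<in> S" "u = Inr l" using "3.prems" by auto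
  have uc: "u \<in> children F (Inr r) p" using "3.prems" by simp
  have pc: "pch F (Inr r) (p # rest)" using "3.prems" by simp
  obtain lp where lp: "lp \<in> S" "p = Inr lp" using child_Inr[OF uc] by blast
  have ub: "card (unm F S m u) \<le> ?D u - 1 + (if u \<noteq> Inr r \<and> \<not> mk m u p then 1 else 0)"
    using unm_bound[OF mok l(1) l(2), of p] uc by blast
  have ur: "u \<noteq> Inr r" using uc root_not_child by blast
  show ?case
  proof (cases "mk m u p")
    case True
    have IH: "card (\<Union>y\<in>ch m (p # rest). unm F S m y) \<le> ?D p - 1 + Xb ?D m (p # rest)"
      using "3.IH"(2)[OF pc] lp by simp
    have "card (\<Union>y\<in>ch m (u # p # rest). unm F S m y) = card (unm F S m u \<union> (\<Union>y\<in>ch m (p # rest). unm F S m y))"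
      using True by simp
    also have "\<dots> \<le> card (unm F S m u) + card (\<Union>y\<in>ch m (p # rest). unm F S m y)" by (rule card_Un_le)
    also have "\<dots> \<le> (?D u - 1) + (?D p - 1 + Xb ?D m (p # rest))" using ub IH True by simp
    finally show ?thesis using True by simp
  next
    case False
    have "card (\<Union>y\<in>ch m (u # p # rest). unm F S m y) = card (unm F S m u)" using False by simp
    also have "\<dots> \<le> ?D u - 1 + 1" using ub ur False by simp
    finally show ?thesis using False by simp
  qed
qed

end



context cst begin

lemma nth_in_take: "j < length xs \<Longrightarrow> j < n \<Longrightarrow> xs ! j \<in> set (take n xs)"
proof -
  assume a: "j < length xs" "j < n"
  then have "take n xs ! j = xs ! j" by simp
  moreover have "j < length (take n xs)" using a by simp
  ultimately show ?thesis by (metis nth_mem)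
qed

lemma nth_in_drop: "j < length xs \<Longrightarrow> n \<le> j \<Longrightarrow> xs ! j \<in> set (drop n xs)"
proof -
  assume a: "j < length xs" "n \<le> j"
  then have "drop n xs ! (j - n) = xs ! j" by simp
  moreover have "j - n < length (drop n xs)" using a by simp
  ultimately show ?thesis by (metis nth_mem)
qed

lemma W_bound:
  assumes mok: "\<forall>l\<in>S. m l \<in> children F (Inr r) (Inr l)" and lS: "l0 \<in> S"
    and pc: "pch F (Inr r) P" and hP: "hd P = Inr l0"
  shows "card (W_set T S F m {Inr l0, m l0}) \<le> card (\<Union>y\<in>ch m P. unm F S m y)"
proof -
  let ?B = "\<Union>y\<in>ch m P. unm F S m y"
  let ?W = "W_set T S F m {Inr l0, m l0}"
  let ?ME = "marked_edges S m"
  have finB: "finite ?B"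
  proof -
    have "?B \<subseteq> F" unfolding unm_def by blast
    then show ?thesis using finF finite_subset by blast
  qed
  have ex: "\<exists>f. f \<in> ?B \<and> Inl ` pr = mend S m ` f" if pr: "pr \<in> ?W" for pr
  proof -
    obtain a b xs where ab: "pr = {a, b}" "a \<in> T" "b \<in> T" "a \<noteq> b"
      and xs: "tpath F xs" "hd xs = Inl a" "last xs = Inl b" "{Inr l0, m l0} \<in> path_edges xs"
      "card (path_edges xs - ?ME) = 1"
      using pr unfolding W_set_def by blast
    obtain f where fs: "path_edges xs - ?ME = {f}" using xs(5) by (metis card_1_singletonE)
    obtain k where k: "Suc k < length xs" "f = {xs ! k, xs ! Suc k}"
      and m2: "mch S m (rev (take (Suc k) xs))" and m1: "mch S m (drop (Suc k) xs)"
      using path_struct[OF xs(1) xs(2) xs(3) fs] by blast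
    have xsne: "xs \<noteq> []" using k by auto
    have fF: "f \<in> F" using xs(1) k unfolding tpath_def by blast
    have fME: "f \<notin> ?ME" using fs by blast
    have h2: "hd (rev (take (Suc k) xs)) = xs ! k"
    proof -
      have "take (Suc k) xs = take k xs @ [xs ! k]" using k by (simp add: take_Suc_conv_app_nth)
      then show ?thesis by (simp add: hd_rev)
    qed
    have l2: "last (rev (take (Suc k) xs)) = Inl a" using xs(2) xsne by (simp add: last_rev)
    have h1: "hd (drop (Suc k) xs) = xs ! Suc k" using k by (simp add: hd_drop_conv_nth)
    have l1: "last (drop (Suc k) xs) = Inl b" using xs(3) k by simp
    have ma: "mend S m (xs ! k) = Inl a" using mend_eq[OF m2] h2 l2 by simp
    have mb: "mend S m (xs ! Suc k) = Inl b" using mend_eq[OF m1] h1 l1 by simp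
    have img: "Inl ` pr = mend S m ` f" using ab k ma mb by simp
    obtain i where i: "Suc i < length xs" "{Inr l0, m l0} = {xs ! i, xs ! Suc i}"
      using xs(4) unfolding path_edges_def by blast
    have eME: "{Inr l0, m l0} \<in> ?ME" unfolding marked_edges_def using lS by blast
    have ik: "i \<noteq> k" using eME fME i k by auto
    have inr: "Inr l0 \<in> {xs ! i, xs ! Suc i}" using i(2) by blast
    obtain y where y: "y \<in> f" "y \<in> ch m P"
    proof (cases "i < k")
      case True
      have "xs ! i \<in> set (take (Suc k) xs)" "xs ! Suc i \<in> set (take (Suc k) xs)"
        using True i by (auto intro!: nth_in_take)
      then have "Inr l0 \<in> set (rev (take (Suc k) xs))" using inr by auto
      then have "xs ! k \<in> ch m P" using mch_ch[OF mok pc hP m2] h2 by simp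
      then show ?thesis using that k by blast
    next
      case False
      then have "k < i" using ik by simp
      then have "xs ! i \<in> set (drop (Suc k) xs)" "xs ! Suc i \<in> set (drop (Suc k) xs)"
        using i by (auto intro!: nth_in_drop)
      then have "Inr l0 \<in> set (drop (Suc k) xs)" using inr by auto
      then have "xs ! Suc k \<in> ch m P" using mch_ch[OF mok pc hP m1] h1 by simp
      then show ?thesis using that k by blast
    qed
    have "f \<in> unm F S m y" unfolding unm_def using fF fME y by blast
    then have "f \<in> ?B" using y by blast
    then show ?thesis using img by blast
  qed
  define phi where "phi pr = (SOME f. f \<in> ?B \<and> Inl ` pr = mend S m ` f)" for pr
  have phi: "phi pr \<in> ?B \<and> Inl ` pr = mend S m ` phi pr" if "pr \<in> ?W" for pr
    unfolding phi_def using someI_ex[OF ex[OF that]] .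
  have inj: "inj_on phi ?W"
  proof (rule inj_onI)
    fix p1 p2 assume a: "p1 \<in> ?W" "p2 \<in> ?W" "phi p1 = phi p2"
    have "Inl ` p1 = mend S m ` phi p1" using phi[OF a(1)] by blast
    also have "\<dots> = mend S m ` phi p2" using a(3) by simp
    also have "\<dots> = Inl ` p2" using phi[OF a(2)] by simp
    finally have "(Inl ` p1 :: ('v + 'l) set) = Inl ` p2" .
    then show "p1 = p2" by (simp add: inj_image_eq_iff)
  qed
  have "phi ` ?W \<subseteq> ?B" using phi by blast
  then show ?thesis using card_inj_on_le[OF inj _ finB] by blast
qed

lemma P_Inr: "pch F (Inr r) P \<Longrightarrow> hd P = Inr l0 \<Longrightarrow> i < length P \<Longrightarrow> \<exists>l. P ! i = Inr l"
proof -
  assume a: "pch F (Inr r) P" "hd P = Inr l0" "i < length P"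
  show ?thesis
  proof (cases i)
    case 0 then show ?thesis using a pch_ne[OF a(1)] by (auto simp: hd_conv_nth)
  next
    case (Suc i')
    then have "P ! i' \<in> children F (Inr r) (P ! i)" using pch_nth[OF a(1)] a(3) by simp
    then show ?thesis using child_Inr by blast
  qed
qed

end



theorem lemma6:
  fixes V :: "'v set" and E :: "'e set" and ends :: "'e \<Rightarrow> 'v set"
    and L :: "'l set" and lends :: "'l \<Rightarrow> 'v set"
    and OPT :: "'l set" and F :: "('v + 'l) set set" and r :: 'l
  assumes inst: "cacap_instance V E ends L lends"
    and opt: "cacap_opt V E ends L lends OPT"
    and st: "steiner_tree V E ends L lends (Inl ` terminals V E ends \<union> Inr ` OPT) F"
    and size: "card F = card OPT + card (terminals V E ends) - 1"
    and leaves: "\<forall>t\<in>terminals V E ends. card {e\<in>F. Inl t \<in> e} = 1"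
    and root: "r \<in> OPT" "\<exists>t\<in>terminals V E ends. {Inr r, Inl t} \<in> F"
  shows "\<forall>l\<in>OPT. c_val (terminals V E ends) OPT F (Inr r) l
                 \<le> Hhat (card (children F (Inr r) (Inr l)))"
proof
  fix l0 assume l0: "l0 \<in> OPT"
  define T where "T = terminals V E ends"
  define N where "N = Inl ` T \<union> Inr ` OPT"
  have tr: "is_tree N F" using st unfolding steiner_tree_def N_def T_def by blast
  have rN: "Inr r \<in> N" unfolding N_def using root(1) by blast
  have lv: "\<forall>t\<in>T. card {e \<in> F. Inl t \<in> e} = 1" using leaves unfolding T_def .
  interpret cst N F r T OPT
    by (intro cst.intro rtree.intro cst_axioms.intro tr rN N_def lv)
  let ?D = "\<lambda>x. card (children F (Inr r) x)"
  define C where "C = mark_candidates T F (Inr r)"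
  define M where "M = markings T OPT F (Inr r)"
  have MC: "M = PiE OPT C" unfolding M_def C_def markings_def by simp
  have finOPT: "finite OPT"
  proof -
    have "Inr ` OPT \<subseteq> N" unfolding N_def by blast
    then have "finite (Inr ` OPT :: ('v + 'l) set)" using finN by (rule rev_finite_subset[rotated])
    then show ?thesis by (simp add: finite_image_iff)
  qed
  have Csub: "C l \<subseteq> children F (Inr r) (Inr l)" for l
    unfolding C_def mark_candidates_def by auto
  have finC1: "finite (C l)" for l by (rule finite_subset[OF Csub fin_children])
  have finC: "\<forall>l\<in>OPT. finite (C l)" using finC1 by blast
  have Hnn: "0 \<le> Hhat k" for k using harm_le_Hhat[of k] harm_nonneg[where 'a=real, of k] by linarith
  have cv: "c_val T OPT F (Inr r) l0 = (\<Sum>m\<in>M. harm (w_val T OPT F m {Inr l0, m l0}) :: real) / real (card M)"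
    unfolding c_val_def M_def by simp
  show "c_val (terminals V E ends) OPT F (Inr r) l0 \<le> Hhat (?D (Inr l0))"
  proof (cases "M = {}")
    case True
    then show ?thesis using cv Hnn T_def by simp
  next
    case False
    then obtain m0 where m0: "m0 \<in> M" by blast
    have mok: "\<forall>l\<in>OPT. m l \<in> children F (Inr r) (Inr l)" if "m \<in> M" for m
      using that Csub unfolding MC by (auto simp: PiE_iff)
    have D1: "1 \<le> ?D (Inr l0)"
    proof -
      have "m0 l0 \<in> children F (Inr r) (Inr l0)" using mok[OF m0] l0 by blast
      then have "children F (Inr r) (Inr l0) \<noteq> {}" by blast
      then show ?thesis using fin_children by (simp add: Suc_le_eq card_gt_0_iff)
    qed
    have l0N: "Inr l0 \<in> N" unfolding N_def using l0 by blast
    obtain P where pc: "pch F (Inr r) P" and hP: "hd P = Inr l0" using rpath_pch[OF l0N] by blast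
    define k where "k = ?D (Inr l0) - 1"
    have w: "harm (w_val T OPT F m {Inr l0, m l0}) \<le> (harm (k + Xb ?D m P) :: real)" if "m \<in> M" for m
    proof -
      have "w_val T OPT F m {Inr l0, m l0} \<le> card (\<Union>y\<in>ch m P. unm F OPT m y)"
        unfolding w_val_def using W_bound[OF mok[OF that] l0 pc hP] .
      also have "\<dots> \<le> ?D (hd P) - 1 + Xb ?D m P"
        using count_bound[OF mok[OF that] pc] hP l0 by simp
      finally show ?thesis unfolding k_def using hP by (intro harm_mono) simp
    qed
    have cond: "\<forall>i. Suc i < length P \<longrightarrow> (\<exists>l\<in>OPT. P ! Suc i = Inr l \<and>
        (P ! i \<in> C l \<longrightarrow> ?D (P ! Suc i) = card (C l)))"
    proof (intro allI impI)
      fix i assume i: "Suc i < length P"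
      have pi: "P ! i \<in> children F (Inr r) (P ! Suc i)" using pch_nth[OF pc i] .
      obtain l where l: "l \<in> OPT" "P ! Suc i = Inr l" using child_Inr[OF pi] by blast
      obtain l' where l': "P ! i = Inr l'" using P_Inr[OF pc hP, of i] i by auto
      have "P ! i \<in> C l \<longrightarrow> ?D (P ! Suc i) = card (C l)"
      proof
        assume "P ! i \<in> C l"
        have "C l = children F (Inr r) (Inr l)"
        proof (cases "children F (Inr r) (Inr l) \<inter> Inl ` T \<noteq> {}")
          case True
          then have "C l = children F (Inr r) (Inr l) \<inter> Inl ` T" unfolding C_def mark_candidates_def by simp
          then have "P ! i \<in> Inl ` T" using \<open>P ! i \<in> C l\<close> by blast
          then show ?thesis using l' by auto
        next
          case False
          then show ?thesis unfolding C_def mark_candidates_def by simp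
        qed
        then show "?D (P ! Suc i) = card (C l)" using l by simp
      qed
      then show "\<exists>l\<in>OPT. P ! Suc i = Inr l \<and> (P ! i \<in> C l \<longrightarrow> ?D (P ! Suc i) = card (C l))"
        using l by blast
    qed
    have pb: "(\<Sum>m\<in>PiE OPT C. harm (k + Xb ?D m P)) \<le> real (card (PiE OPT C)) * Hhat (Suc k)"
      using prob_bound[OF finOPT finC cond pch_distinct[OF pc] pch_ne[OF pc]] .
    have "(\<Sum>m\<in>M. harm (w_val T OPT F m {Inr l0, m l0}) :: real) \<le> (\<Sum>m\<in>M. harm (k + Xb ?D m P))"
      using w by (rule sum_mono)
    also have "\<dots> \<le> real (card M) * Hhat (?D (Inr l0))"
      using pb D1 unfolding MC k_def by simp
    finally have sb: "(\<Sum>m\<in>M. harm (w_val T OPT F m {Inr l0, m l0}) :: real) \<le> real (card M) * Hhat (?D (Inr l0))" .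
    have finM: "finite M" unfolding MC using finOPT finC by (intro finite_PiE) auto
    have cM: "0 < real (card M)" using False finM by (simp add: card_gt_0_iff)
    have "c_val T OPT F (Inr r) l0 \<le> Hhat (?D (Inr l0))"
      unfolding cv using sb cM by (simp add: divide_le_eq mult.commute)
    then show ?thesis unfolding T_def .
  qed
qed


end
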